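(* Let $\mathcal{A}_1$ and $\mathcal{A}_2$ be (unital, associative) algebras over a field $\mathbb{K}$ and let $\Phi\colon\mathcal{A}_1\to\mathcal{A}_2$ be a surjective algebra homomorphism such that $\ker(\Phi)$ is spanned as a $\mathbb{K}$-vector space by an idempotent $e$. If $\mathcal{A}_2$ is semisimple, then $\mathcal{A}_1$ is semisimple. *)

theory Defs
  imports Complex_Main
begin

definition k_algebra :: "('k::field \<Rightarrow> 'a::ring_1 \<Rightarrow> 'a) \<Rightarrow> bool" where
  "k_algebra s \<longleftrightarrow> Vector_Spaces.vector_space s \<and>
     (\<forall>c x y. s c (x * y) = s c x * y \<and> s c (x * y) = x * s c y)"

definition alg_hom :: "('k::field \<Rightarrow> 'a::ring_1 \<Rightarrow> 'a) \<Rightarrow> ('k \<Rightarrow> 'b::ring_1 \<Rightarrow> 'b)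
     \<Rightarrow> ('a \<Rightarrow> 'b) \<Rightarrow> bool" where
  "alg_hom s1 s2 \<Phi> \<longleftrightarrow> Vector_Spaces.linear s1 s2 \<Phi> \<and>
     (\<forall>x y. \<Phi> (x * y) = \<Phi> x * \<Phi> y) \<and> \<Phi> 1 = 1"

definition left_ideal :: "'a::ring_1 set \<Rightarrow> bool" where
  "left_ideal L \<longleftrightarrow> 0 \<in> L \<and> (\<forall>x\<in>L. \<forall>y\<in>L. x + y \<in> L) \<and> (\<forall>r. \<forall>x\<in>L. r * x \<in> L)"

text \<open>A ring is semisimple if it is semisimple as a left module over itself, i.e. every
  left submodule (left ideal) is a direct summand (Lam, First Course, Sect. 2).\<close>
definition semisimple_ring :: "'a::ring_1 itself \<Rightarrow> bool" where
  "semisimple_ring _ \<longleftrightarrow> (\<forall>L::'a set. left_ideal L \<longrightarrow>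
     (\<exists>M. left_ideal M \<and> L \<inter> M = {0} \<and> {x + y | x y. x \<in> L \<and> y \<in> M} = UNIV))"

end

theory Submission
  imports Defs
begin

theorem proposition4p7:
  fixes s1 :: "'k::field \<Rightarrow> 'a::ring_1 \<Rightarrow> 'a"
    and s2 :: "'k \<Rightarrow> 'b::ring_1 \<Rightarrow> 'b"
    and \<Phi> :: "'a \<Rightarrow> 'b"
    and e :: 'a
  assumes "k_algebra s1"
    and "k_algebra s2"
    and "alg_hom s1 s2 \<Phi>"
    and "surj \<Phi>"
    and "e * e = e"
    and "{x. \<Phi> x = 0} = module.span s1 {e}"
    and "semisimple_ring TYPE('b)"
  shows "semisimple_ring TYPE('a)"
proof -
  have lin: "Vector_Spaces.linear s1 s2 \<Phi>" and mul: "\<And>x y. \<Phi> (x * y) = \<Phi> x * \<Phi> y"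
    using assms(3) unfolding alg_hom_def by auto
  interpret L: Vector_Spaces.linear s1 s2 \<Phi> by (rule lin)
  have vs: "vector_space s1" using assms(1) unfolding k_algebra_def by auto
  interpret V: vector_space s1 by (rule vs)
  have sc: "\<And>c x. s1 c x = s1 c 1 * x" using assms(1) unfolding k_algebra_def
    by (metis mult_1)
  have ka: "\<And>c x y. s1 c (x * y) = s1 c x * y" using assms(1) unfolding k_algebra_def by blast
  have ker: "\<And>x. \<Phi> x = 0 \<longleftrightarrow> (\<exists>c. x = s1 c e)"
  proof -
    fix x
    have "\<Phi> x = 0 \<longleftrightarrow> x \<in> module.span s1 {e}" using assms(6) by blast
    also have "\<dots> \<longleftrightarrow> (\<exists>c. x = s1 c e)" unfolding L.vs1.span_singleton by auto
    finally show "\<Phi> x = 0 \<longleftrightarrow> (\<exists>c. x = s1 c e)" .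
  qed
  have Pe: "\<Phi> e = 0"
  proof -
    have "e = s1 1 e" by simp
    then show ?thesis using ker[of e] by blast
  qed
  show ?thesis unfolding semisimple_ring_def
  proof (intro allI impI)
    fix L :: "'a set" assume LI: "left_ideal L"
    have L0: "0 \<in> L" and Ladd: "\<And>x y. x \<in> L \<Longrightarrow> y \<in> L \<Longrightarrow> x + y \<in> L"
      and Lmul: "\<And>r x. x \<in> L \<Longrightarrow> r * x \<in> L" using LI unfolding left_ideal_def by auto
    have "left_ideal (\<Phi> ` L)" unfolding left_ideal_def
    proof (intro conjI ballI allI)
      have "\<Phi> 0 = 0" by (rule L.zero)
      then show "0 \<in> \<Phi> ` L" using L0 by (metis imageI)
    next
      fix x y assume "x \<in> \<Phi> ` L" "y \<in> \<Phi> ` L"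
      then obtain a b where ab: "a \<in> L" "b \<in> L" "x = \<Phi> a" "y = \<Phi> b" by blast
      then have "x + y = \<Phi> (a + b)" by (simp add: L.add)
      moreover have "a + b \<in> L" using ab Ladd by blast
      ultimately show "x + y \<in> \<Phi> ` L" by blast
    next
      fix r x assume "x \<in> \<Phi> ` L"
      then obtain l where l: "l \<in> L" "x = \<Phi> l" by auto
      obtain r' where "r = \<Phi> r'" using assms(4) unfolding surj_def by blast
      then have "r * x = \<Phi> (r' * l)" using l mul by simp
      moreover have "r' * l \<in> L" using l Lmul by blast
      ultimately show "r * x \<in> \<Phi> ` L" by blast
    qed
    moreover have ss: "\<forall>L'::'b set. left_ideal L' \<longrightarrow>
     (\<exists>M. left_ideal M \<and> L' \<inter> M = {0} \<and> {x + y | x y. x \<in> L' \<and> y \<in> M} = UNIV)"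
      using assms(7) by (simp only: semisimple_ring_def)
    ultimately have "\<exists>M. left_ideal M \<and> \<Phi> ` L \<inter> M = {0} \<and> {x + y | x y. x \<in> \<Phi> ` L \<and> y \<in> M} = UNIV"
      by (rule_tac mp[OF spec[OF ss]])
    then obtain N where N: "left_ideal N" "\<Phi> ` L \<inter> N = {0}"
      "{x + y | x y. x \<in> \<Phi> ` L \<and> y \<in> N} = UNIV"
      by (elim exE conjE)

    have N0: "0 \<in> N" and Nadd: "\<And>x y. x \<in> N \<Longrightarrow> y \<in> N \<Longrightarrow> x + y \<in> N"
      and Nmul: "\<And>r x. x \<in> N \<Longrightarrow> r * x \<in> N" using N(1) unfolding left_ideal_def by auto
    have decomp: "\<exists>l m0 c. l \<in> L \<and> \<Phi> m0 \<in> N \<and> y = l + m0 + s1 c e" for y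
    proof -
      have "\<Phi> y \<in> {x + y | x y. x \<in> \<Phi> ` L \<and> y \<in> N}" using N(3) by auto
      then obtain l n where ln: "l \<in> L" "n \<in> N" "\<Phi> y = \<Phi> l + n" by auto
      obtain m0 where m0: "n = \<Phi> m0" using assms(4) unfolding surj_def by blast
      have "\<Phi> (y - l - m0) = 0" using ln m0 by (simp add: L.diff)
      then obtain c where "y - l - m0 = s1 c e" using ker by blast
      then have "y = l + m0 + s1 c e" by (simp add: algebra_simps)
      then show ?thesis using ln m0 by blast
    qed
    have inter_ker: "x \<in> L \<Longrightarrow> \<Phi> x \<in> N \<Longrightarrow> \<exists>c. x = s1 c e" for x
      using N(2) ker by blast
    show "\<exists>M. left_ideal M \<and> L \<inter> M = {0} \<and> {x + y | x y. x \<in> L \<and> y \<in> M} = UNIV"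
    proof (cases "e \<in> L")
      case True
      let ?M = "{m. \<Phi> m \<in> N \<and> m * e = 0}"
      have "left_ideal ?M" unfolding left_ideal_def
      proof (intro conjI ballI allI)
        show "0 \<in> ?M" using N0 by simp
      next
        fix x y assume "x \<in> ?M" "y \<in> ?M"
        then show "x + y \<in> ?M" using Nadd by (simp add: L.add distrib_right)
      next
        fix r x assume x: "x \<in> ?M"
        have "r * x * e = r * (x * e)" by (rule mult.assoc)
        then show "r * x \<in> ?M" using x Nmul mul by simp
      qed
      moreover have "L \<inter> ?M = {0}"
      proof safe
        fix x assume x: "x \<in> L" "\<Phi> x \<in> N" "x * e = 0"
        then obtain c where c: "x = s1 c e" using inter_ker by blast
        have "x * e = x" unfolding c using ka[of c e e] assms(5) by simp
        then show "x = 0" using x by simp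
      next
        show "0 \<in> L" by (rule L0)
      qed (auto simp: N0)
      moreover have "{x + y | x y. x \<in> L \<and> y \<in> ?M} = UNIV"
      proof (rule sym, rule UNIV_eq_I)
        fix y
        obtain l m0 c where d: "l \<in> L" "\<Phi> m0 \<in> N" "y = l + m0 + s1 c e" using decomp by blast
        have P1: "\<Phi> 1 = 1" using assms(3) unfolding alg_hom_def by auto
        have h1: "\<Phi> (m0 * (1 - e)) = \<Phi> m0" by (simp add: mul L.diff Pe P1)
        have h2: "m0 * (1 - e) * e = 0" by (simp add: algebra_simps mult.assoc assms(5))
        have h3: "l + m0 * e + s1 c e \<in> L" 
        proof -
          have "m0 * e \<in> L" using True Lmul by blast
          moreover have "s1 c e \<in> L" using True Lmul sc[of c e] by simp
          ultimately show ?thesis using d(1) Ladd by blast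
        qed
        have eq: "y = (l + m0 * e + s1 c e) + m0 * (1 - e)" using d by (simp add: algebra_simps)
        have mem: "m0 * (1 - e) \<in> ?M" using h1 h2 d(2) by simp
        have ex: "\<exists>a b. y = a + b \<and> a \<in> L \<and> b \<in> ?M"
          by (rule exI[of _ "l + m0 * e + s1 c e"], rule exI[of _ "m0 * (1 - e)"],
              intro conjI, fact eq, fact h3, fact mem)
        show "y \<in> {x + y | x y. x \<in> L \<and> y \<in> ?M}"
          using ex by blast
      qed
      ultimately show ?thesis by blast
    next
      case False
      let ?M = "{m. \<Phi> m \<in> N}"
      have "left_ideal ?M" unfolding left_ideal_def
        using N0 Nadd Nmul mul by (simp add: L.add)
      moreover have "L \<inter> ?M = {0}"
      proof safe
        fix x assume x: "x \<in> L" "\<Phi> x \<in> N"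
        then obtain c where c: "x = s1 c e" using inter_ker by blast
        show "x = 0"
        proof (rule ccontr)
          assume "x \<noteq> 0"
          then have "c \<noteq> 0" using c by (metis L.vs1.scale_zero_left)
          then have "s1 (inverse c) x = e" unfolding c by (simp add: L.vs1.scale_scale)
          then have "e \<in> L" using Lmul[OF x(1), of "s1 (inverse c) 1"] sc[of "inverse c" x] by simp
          then show False using False by simp
        qed
      next
        show "0 \<in> L" by (rule L0)
      qed (auto simp: N0)
      moreover have "{x + y | x y. x \<in> L \<and> y \<in> ?M} = UNIV"
      proof (rule sym, rule UNIV_eq_I)
        fix y
        obtain l m0 c where d: "l \<in> L" "\<Phi> m0 \<in> N" "y = l + m0 + s1 c e" using decomp by blast
        have "\<Phi> (m0 + s1 c e) = \<Phi> m0" proof -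
          have "\<Phi> (s1 c e) = 0" using ker by blast
          then show ?thesis by (simp add: L.add)
        qed
        then have mem: "m0 + s1 c e \<in> ?M" using d(2) by simp
        have eq: "y = l + (m0 + s1 c e)" using d by (simp add: algebra_simps)
        have ex: "\<exists>a b. y = a + b \<and> a \<in> L \<and> b \<in> ?M"
          by (rule exI[of _ l], rule exI[of _ "m0 + s1 c e"],
              intro conjI, fact eq, fact d(1), fact mem)
        show "y \<in> {x + y | x y. x \<in> L \<and> y \<in> ?M}"
          using ex by blast
      qed
      ultimately show ?thesis by blast
    qed
  qed
qed

end
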